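(* Let $\mu>0$ and let $X\sim\mathcal N(0,\sigma_X^2)$, $Y\sim\mathcal N(0,\sigma_Y^2)$ be independent with $\sigma_X^2+\sigma_Y^2>0$. Then $$\mathbb E\Big[\Big(1-\tanh^2\Big(\frac{X+Y}{\mu}\Big)\Big)XY\mathbf 1_{\{X+Y>0\}}\Big]\ge-\frac1{\sqrt{2\pi}}\frac{\mu\sigma_X^2\sigma_Y^2}{(\sigma_X^2+\sigma_Y^2)^{3/2}}-\frac3{\sqrt{2\pi}}\frac{\sigma_X^2\sigma_Y^2\mu^3}{(\sigma_X^2+\sigma_Y^2)^{5/2}}.$$ *)

theory Defs
  imports "HOL-Probability.Probability"
begin

definition gaussian_measure :: "real \<Rightarrow> real \<Rightarrow> real measure" where
  "gaussian_measure m s =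
     (if s > 0 then density lborel (normal_density m s) else return borel m)"

end

theory Submission
  imports Defs "HOL-Real_Asymp.Real_Asymp"
begin



lemma dphi: "\<sigma> > 0 \<Longrightarrow> (normal_density 0 \<sigma> has_real_derivative (- x / \<sigma>\<^sup>2) * normal_density 0 \<sigma> x) (at x)"
  unfolding normal_density_def
  by (auto intro!: derivative_eq_intros simp: field_simps power2_eq_square)

lemma phi_lim: "\<sigma> > 0 \<Longrightarrow> (normal_density 0 \<sigma> \<longlongrightarrow> 0) at_top"
  unfolding normal_density_def by real_asymp

lemma int_phi_bounded:
  assumes "f \<in> borel_measurable borel" "\<And>x. \<bar>f x\<bar> \<le> B" "\<sigma> > 0"
  shows "integrable lborel (\<lambda>x. normal_density m \<sigma> x * f x)"
proof (rule Bochner_Integration.integrable_bound[of _ "\<lambda>x. B * normal_density m \<sigma> x"])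
  show "integrable lborel (\<lambda>x. B * normal_density m \<sigma> x)" using assms(3) by (intro integrable_mult_right integrable_normal_density)
  show "AE x in lborel. norm (normal_density m \<sigma> x * f x) \<le> norm (B * normal_density m \<sigma> x)"
  proof (intro AE_I2)
    fix x have "\<bar>f x\<bar> \<le> \<bar>B\<bar>" using assms(2)[of x] by linarith
    then show "norm (normal_density m \<sigma> x * f x) \<le> norm (B * normal_density m \<sigma> x)"
      by (auto simp: abs_mult mult.commute intro!: mult_right_mono)
  qed
qed (use assms in auto)

lemma int_phi_x_bounded:
  assumes "f \<in> borel_measurable borel" "\<And>x. \<bar>f x\<bar> \<le> B" "\<sigma> > 0"
  shows "integrable lborel (\<lambda>x. normal_density 0 \<sigma> x * (x * f x))"
proof (rule Bochner_Integration.integrable_bound[of _ "\<lambda>x. B * (normal_density 0 \<sigma> x * \<bar>x - 0\<bar> ^ 1)"])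
  show "integrable lborel (\<lambda>x. B * (normal_density 0 \<sigma> x * \<bar>x - 0\<bar> ^ 1))"
    using assms(3) by (intro integrable_mult_right integrable_normal_moment_abs)
  show "AE x in lborel. norm (normal_density 0 \<sigma> x * (x * f x)) \<le> norm (B * (normal_density 0 \<sigma> x * \<bar>x - 0\<bar> ^ 1))"
  proof (intro AE_I2)
    fix x have "\<bar>f x\<bar> \<le> \<bar>B\<bar>" using assms(2)[of x] by linarith
    then show "norm (normal_density 0 \<sigma> x * (x * f x)) \<le> norm (B * (normal_density 0 \<sigma> x * \<bar>x - 0\<bar> ^ 1))"
    proof -
      have "\<bar>f x\<bar> * (\<bar>x\<bar> * normal_density 0 \<sigma> x) \<le> \<bar>B\<bar> * (\<bar>x\<bar> * normal_density 0 \<sigma> x)"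
        using \<open>\<bar>f x\<bar> \<le> \<bar>B\<bar>\<close> by (intro mult_right_mono) auto
      then show ?thesis by (simp add: abs_mult mult_ac)
    qed
  qed
qed (use assms in auto)

lemma stein_half:
  fixes F F' :: "real \<Rightarrow> real" and \<sigma> a B B' :: real
  assumes \<sigma>: "\<sigma> > 0"
    and dF: "\<And>x. (F has_real_derivative F' x) (at x)"
    and cF': "\<And>x. isCont F' x"
    and bF: "\<And>x. \<bar>F x\<bar> \<le> B" and bF': "\<And>x. \<bar>F' x\<bar> \<le> B'"
  shows "(\<integral>x. normal_density 0 \<sigma> x * (x * F x * indicator {a<..} x) \<partial>lborel)
       = \<sigma>\<^sup>2 * (F a * normal_density 0 \<sigma> a)
         + \<sigma>\<^sup>2 * (\<integral>x. normal_density 0 \<sigma> x * (F' x * indicator {a<..} x) \<partial>lborel)"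
proof -
  let ?p = "normal_density 0 \<sigma>"
  have cF: "isCont F x" for x using dF DERIV_isCont by blast
  have mF[measurable]: "F \<in> borel_measurable borel"
    by (intro borel_measurable_continuous_onI continuous_at_imp_continuous_on) (auto intro: cF)
  have mF'[measurable]: "F' \<in> borel_measurable borel"
    by (intro borel_measurable_continuous_onI continuous_at_imp_continuous_on) (auto intro: cF')
  define f where "f x = ?p x * (x * F x) - \<sigma>\<^sup>2 * (?p x * F' x)" for x
  define H where "H x = - \<sigma>\<^sup>2 * (F x * ?p x)" for x
  have dH: "(H has_real_derivative f x) (at x)" for x
    unfolding H_def f_def
    apply (rule derivative_eq_intros dF dphi[OF \<sigma>] | simp)+
    using \<sigma> by (simp add: field_simps)
  have int1: "integrable lborel (\<lambda>x. ?p x * (x * F x))"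
    by (rule int_phi_x_bounded[OF mF bF \<sigma>])
  have int2: "integrable lborel (\<lambda>x. ?p x * F' x)"
    by (rule int_phi_bounded[OF mF' bF' \<sigma>])
  have intf: "integrable lborel f"
    unfolding f_def using int1 int2 by auto
  have ein: "einterval (ereal a) \<infinity> = {a<..}" by (auto simp: einterval_def)
  have "(LBINT x=ereal a..\<infinity>. f x) = 0 - H a"
  proof (rule interval_integral_FTC_integrable)
    show "ereal a < \<infinity>" by simp
    show "(H has_vector_derivative f x) (at x)" for x
      using dH has_real_derivative_iff_has_vector_derivative by blast
    show "isCont f x" for x
      unfolding f_def using cF cF' dphi[OF \<sigma>, THEN DERIV_isCont] by (intro continuous_intros) auto
    show "set_integrable lborel (einterval (ereal a) \<infinity>) f"
      unfolding set_integrable_def by (rule integrable_mult_indicator) (auto simp: ein intf)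
    show "((H \<circ> real_of_ereal) \<longlongrightarrow> H a) (at_right (ereal a))"
      unfolding ereal_tendsto_simps using dH[THEN DERIV_isCont, of a]
      by (simp add: isCont_def filterlim_at_split)
    show "((H \<circ> real_of_ereal) \<longlongrightarrow> 0) (at_left \<infinity>)"
      unfolding ereal_tendsto_simps
    proof (rule Lim_null_comparison)
      show "\<forall>\<^sub>F x in at_top. norm (H x) \<le> \<sigma>\<^sup>2 * B * ?p x"
        by (intro always_eventually allI) (auto simp: H_def abs_mult mult.assoc intro!: mult_right_mono mult_left_mono bF)
      show "((\<lambda>x. \<sigma>\<^sup>2 * B * ?p x) \<longlongrightarrow> 0) at_top"
        using phi_lim[OF \<sigma>] by (auto intro: tendsto_mult_right_zero)
    qed
  qed
  then have "(\<integral>x. indicator {a<..} x * f x \<partial>lborel) = - H a"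
    by (simp add: interval_lebesgue_integral_def set_lebesgue_integral_def ein)
  moreover have "(\<integral>x. indicator {a<..} x * f x \<partial>lborel)
     = (\<integral>x. ?p x * (x * F x * indicator {a<..} x) \<partial>lborel)
       - \<sigma>\<^sup>2 * (\<integral>x. ?p x * (F' x * indicator {a<..} x) \<partial>lborel)"
  proof -
    have i1: "integrable lborel (\<lambda>x. ?p x * (x * F x * indicator {a<..} x))"
      using integrable_mult_indicator[OF _ int1, of "{a<..}"]
      by (simp add: mult_ac)
    have i2: "integrable lborel (\<lambda>x. ?p x * (F' x * indicator {a<..} x))"
      using integrable_mult_indicator[OF _ int2, of "{a<..}"]
      by (simp add: mult_ac)
    have "(\<integral>x. indicator {a<..} x * f x \<partial>lborel)
        = (\<integral>x. ?p x * (x * F x * indicator {a<..} x) - \<sigma>\<^sup>2 * (?p x * (F' x * indicator {a<..} x)) \<partial>lborel)"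
      by (rule Bochner_Integration.integral_cong) (auto simp: f_def algebra_simps)
    also have "\<dots> = (\<integral>x. ?p x * (x * F x * indicator {a<..} x) \<partial>lborel)
       - \<sigma>\<^sup>2 * (\<integral>x. ?p x * (F' x * indicator {a<..} x) \<partial>lborel)" using i1 i2 by simp
    finally show ?thesis .
  qed
  ultimately show ?thesis by (simp add: H_def)
qed



definition gg :: "real \<Rightarrow> real \<Rightarrow> real" where "gg m t = 1 - (tanh (t / m))\<^sup>2"
definition g1 :: "real \<Rightarrow> real \<Rightarrow> real" where
  "g1 m t = - (2 / m) * tanh (t / m) * (1 - (tanh (t / m))\<^sup>2)"
definition g2 :: "real \<Rightarrow> real \<Rightarrow> real" where
  "g2 m t = - (2 / m\<^sup>2) * (1 - 3 * (tanh (t / m))\<^sup>2) * (1 - (tanh (t / m))\<^sup>2)"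

lemma cosh_real_ne0: "cosh (x::real) \<noteq> 0" using cosh_real_pos[of x] by simp

lemma d_gg: "m > 0 \<Longrightarrow> (gg m has_real_derivative g1 m t) (at t)"
  unfolding gg_def g1_def
  by (auto intro!: derivative_eq_intros simp: field_simps power2_eq_square)

lemma d_g1: "m > 0 \<Longrightarrow> (g1 m has_real_derivative g2 m t) (at t)"
  unfolding g2_def g1_def
  by (auto intro!: derivative_eq_intros simp: field_simps power2_eq_square)

lemma tanh_sq_le1: "(tanh (x::real))\<^sup>2 \<le> 1"
  using tanh_real_bounds[of x] by (auto simp: abs_square_le_1)

lemma b_gg: "\<bar>gg m t\<bar> \<le> 1"
  unfolding gg_def using tanh_sq_le1[of "t/m"] by auto

lemma b_g1: "m > 0 \<Longrightarrow> \<bar>g1 m t\<bar> \<le> 2 / m"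
proof -
  assume m: "m > 0"
  have a: "\<bar>tanh (t/m)\<bar> \<le> 1" using tanh_real_bounds[of "t/m"] by auto
  have b: "\<bar>1 - (tanh (t / m))\<^sup>2\<bar> \<le> 1" using tanh_sq_le1[of "t/m"] by auto
  have "\<bar>g1 m t\<bar> = (2/m) * (\<bar>tanh (t/m)\<bar> * \<bar>1 - (tanh (t / m))\<^sup>2\<bar>)"
    using m by (simp add: g1_def abs_mult)
  also have "\<dots> \<le> (2/m) * 1"
    using a b m by (intro mult_left_mono) (auto simp: mult_le_one)
  finally show ?thesis by simp
qed

lemma b_g2: "m > 0 \<Longrightarrow> \<bar>g2 m t\<bar> \<le> 4 / m\<^sup>2"
proof -
  assume m: "m > 0"
  have a: "\<bar>1 - 3 * (tanh (t / m))\<^sup>2\<bar> \<le> 2" using tanh_sq_le1[of "t/m"] zero_le_power2[of "tanh (t/m)"]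
    by (simp only: abs_le_iff) linarith
  have b: "\<bar>1 - (tanh (t / m))\<^sup>2\<bar> \<le> 1" using tanh_sq_le1[of "t/m"] by auto
  have "\<bar>g2 m t\<bar> = \<bar>2/m\<^sup>2\<bar> * \<bar>1 - 3 * (tanh (t / m))\<^sup>2\<bar> * \<bar>1 - (tanh (t / m))\<^sup>2\<bar>"
    by (simp only: g2_def abs_mult abs_minus_cancel)
  also have "\<dots> = (2/m\<^sup>2) * (\<bar>1 - 3 * (tanh (t / m))\<^sup>2\<bar> * \<bar>1 - (tanh (t / m))\<^sup>2\<bar>)"
    by simp
  also have "\<dots> \<le> (2/m\<^sup>2) * (2 * 1)"
    using a b m by (intro mult_left_mono mult_mono) auto
  finally show ?thesis by simp
qed

lemma gg_0[simp]: "gg m 0 = 1" by (simp add: gg_def)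
lemma g1_0[simp]: "g1 m 0 = 0" by (simp add: g1_def)

lemma cont_g1: "m > 0 \<Longrightarrow> isCont (g1 m) t" using d_g1 DERIV_isCont by blast
lemma cont_g2: "m > 0 \<Longrightarrow> isCont (g2 m) t"
  unfolding g2_def by (intro continuous_intros) auto

lemma lim_tgg: "m > 0 \<Longrightarrow> ((\<lambda>t. t * gg m t - m * tanh (t / m)) \<longlongrightarrow> - m) at_top"
  unfolding gg_def tanh_real_altdef by real_asymp

lemma int_tg1:
  assumes m: "m > 0"
  shows "set_integrable lborel (einterval 0 \<infinity>) (\<lambda>t. - (t * g1 m t))"
    "(LBINT t=0..\<infinity>. - (t * g1 m t)) = m"
proof -
  let ?G = "\<lambda>t. - (t * gg m t - m * tanh (t / m))"
  have dG: "(?G has_real_derivative - (t * g1 m t)) (at t)" for t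
    unfolding gg_def g1_def using m
    by (auto intro!: derivative_eq_intros simp: field_simps power2_eq_square)
  have nn: "0 < t \<Longrightarrow> 0 \<le> - (t * g1 m t)" for t
    using m tanh_sq_le1[of "t/m"] by (simp add: g1_def mult_nonneg_nonneg)
  note r = interval_integral_FTC_nonneg[where F = ?G and A = 0 and B = m, OF _ dG]
  have c: "isCont (\<lambda>t. - (t * g1 m t)) t" for t using cont_g1[OF m] by (intro continuous_intros) auto
  have A: "((?G \<circ> real_of_ereal) \<longlongrightarrow> 0) (at_right 0)"
    unfolding zero_ereal_def ereal_tendsto_simps
    using dG[of 0, THEN DERIV_isCont] by (simp add: isCont_def filterlim_at_split)
  have B: "((?G \<circ> real_of_ereal) \<longlongrightarrow> m) (at_left \<infinity>)"
    unfolding ereal_tendsto_simps using tendsto_minus[OF lim_tgg[OF m]] by simp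
  show "set_integrable lborel (einterval 0 \<infinity>) (\<lambda>t. - (t * g1 m t))"
    by (rule r(1)) (use c A B nn in auto)
  show "(LBINT t=0..\<infinity>. - (t * g1 m t)) = m"
    using r(2)[of 0 \<infinity>] c A B nn by auto
qed



lemma int1d: "\<sigma> > 0 \<Longrightarrow> integrable (density lborel (normal_density 0 \<sigma>)) (\<lambda>x. 1 + \<bar>x\<bar>)"
proof -
  assume s: "\<sigma> > 0"
  have "integrable lborel (\<lambda>x. normal_density 0 \<sigma> x + normal_density 0 \<sigma> x * \<bar>x - 0\<bar> ^ 1)"
    using s by (intro Bochner_Integration.integrable_add integrable_normal_density integrable_normal_moment_abs)
  then have "integrable lborel (\<lambda>x. normal_density 0 \<sigma> x *\<^sub>R (1 + \<bar>x\<bar>))"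
    by (simp add: algebra_simps)
  then show ?thesis
    by (subst integrable_density) auto
qed

lemma nn1d: "\<sigma> > 0 \<Longrightarrow> \<exists>r. (\<integral>\<^sup>+x. ennreal (1 + \<bar>x\<bar>) \<partial>density lborel (normal_density 0 \<sigma>)) = ennreal r"
  using nn_integral_eq_integral[OF int1d] by auto

lemma int_prod:
  fixes f :: "real \<times> real \<Rightarrow> real"
  assumes s1: "\<sigma>1 > 0" and s2: "\<sigma>2 > 0" and f[measurable]: "f \<in> borel_measurable (borel \<Otimes>\<^sub>M borel)"
    and b: "\<And>x y. \<bar>f (x, y)\<bar> \<le> C * ((1 + \<bar>x\<bar>) * (1 + \<bar>y\<bar>))"
  shows "integrable (density lborel (normal_density 0 \<sigma>1) \<Otimes>\<^sub>M density lborel (normal_density 0 \<sigma>2)) f"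
proof -
  let ?N1 = "density lborel (normal_density 0 \<sigma>1)" and ?N2 = "density lborel (normal_density 0 \<sigma>2)"
  interpret N2: prob_space ?N2 using prob_space_normal_density s2 by auto
  let ?g = "\<lambda>z::real\<times>real. (1 + \<bar>fst z\<bar>) * (1 + \<bar>snd z\<bar>)"
  obtain r1 where r1: "(\<integral>\<^sup>+x. ennreal (1 + \<bar>x\<bar>) \<partial>?N1) = ennreal r1" using nn1d[OF s1] by blast
  obtain r2 where r2: "(\<integral>\<^sup>+x. ennreal (1 + \<bar>x\<bar>) \<partial>?N2) = ennreal r2" using nn1d[OF s2] by blast
  have r2pos: "r2 \<ge> 0"
  proof -
    have "(\<integral>\<^sup>+x. ennreal (1 + \<bar>x\<bar>) \<partial>?N2) \<ge> (\<integral>\<^sup>+x. 1 \<partial>?N2)"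
      by (intro nn_integral_mono) auto
    then show ?thesis using r2 N2.emeasure_space_1 by (auto simp: ennreal_le_iff2)
  qed
  have "integral\<^sup>N (?N1 \<Otimes>\<^sub>M ?N2) (\<lambda>z. ennreal (?g z)) = (\<integral>\<^sup>+x. \<integral>\<^sup>+y. ennreal (?g (x, y)) \<partial>?N2 \<partial>?N1)"
    by (rule N2.nn_integral_fst[symmetric]) simp
  also have "\<dots> = (\<integral>\<^sup>+x. ennreal (1 + \<bar>x\<bar>) * ennreal r2 \<partial>?N1)"
    using r2 by (intro nn_integral_cong) (simp add: ennreal_mult nn_integral_cmult)
  also have "\<dots> = ennreal (r1 * r2)"
    using r1 r2pos by (simp add: nn_integral_multc ennreal_mult'')
  finally have g: "integrable (?N1 \<Otimes>\<^sub>M ?N2) ?g"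
    by (intro integrableI_nn_integral_finite[where x = "r1*r2"]) auto
  show ?thesis
    apply (rule Bochner_Integration.integrable_bound[OF integrable_mult_right[OF g, of C]])
    using b by (auto intro!: AE_I2 simp: split_beta intro: order.trans[OF _ abs_ge_self])
qed




lemma meas_tanh[measurable]: "(tanh :: real \<Rightarrow> real) \<in> borel_measurable borel"
  by (intro borel_measurable_continuous_onI continuous_intros) auto
lemma meas_gg[measurable]: "gg m \<in> borel_measurable borel"
  unfolding gg_def by measurable
lemma meas_g1[measurable]: "g1 m \<in> borel_measurable borel"
  unfolding g1_def by measurable
lemma meas_g2[measurable]: "g2 m \<in> borel_measurable borel"
  unfolding g2_def by measurable

lemma stein_shift:
  fixes G G' :: "real \<Rightarrow> real"
  assumes \<sigma>: "\<sigma> > 0"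
    and dG: "\<And>x. (G has_real_derivative G' x) (at x)"
    and cG': "\<And>x. isCont G' x"
    and bG: "\<And>x. \<bar>G x\<bar> \<le> B" and bG': "\<And>x. \<bar>G' x\<bar> \<le> B'"
  shows "(\<integral>x. x * (G (x + y) * indicator {0<..} (x + y)) \<partial>density lborel (normal_density 0 \<sigma>))
     = \<sigma>\<^sup>2 * (G 0 * normal_density 0 \<sigma> (- y))
       + \<sigma>\<^sup>2 * (\<integral>x. G' (x + y) * indicator {0<..} (x + y) \<partial>density lborel (normal_density 0 \<sigma>))"
proof -
  have cG: "isCont G x" for x using dG DERIV_isCont by blast
  have mG[measurable]: "G \<in> borel_measurable borel"
    by (intro borel_measurable_continuous_onI continuous_at_imp_continuous_on) (auto intro: cG)
  have mG'[measurable]: "G' \<in> borel_measurable borel"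
    by (intro borel_measurable_continuous_onI continuous_at_imp_continuous_on) (auto intro: cG')
  have ind: "indicator {0<..} (x + y) = (indicator {-y<..} x :: real)" for x
    by (auto simp: indicator_def)
  have e1: "(\<integral>x. x * (G (x + y) * indicator {0<..} (x + y)) \<partial>density lborel (normal_density 0 \<sigma>))
      = (\<integral>x. normal_density 0 \<sigma> x * (x * G (x + y) * indicator {-y<..} x) \<partial>lborel)"
    by (subst integral_density) (auto simp: ind mult_ac)
  have e2: "(\<integral>x. G' (x + y) * indicator {0<..} (x + y) \<partial>density lborel (normal_density 0 \<sigma>))
      = (\<integral>x. normal_density 0 \<sigma> x * (G' (x + y) * indicator {-y<..} x) \<partial>lborel)"
    by (subst integral_density) (auto simp: ind mult_ac)
  have d: "((\<lambda>x. G (x + y)) has_real_derivative G' (x + y)) (at x)" for x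
  proof -
    have "((\<lambda>x. x + y) has_real_derivative 1) (at x)" by (auto intro!: derivative_eq_intros)
    from DERIV_chain2[OF dG this] show ?thesis by simp
  qed
  have c: "isCont (\<lambda>x. G' (x + y)) x" for x
    by (rule isCont_o2[OF _ cG']) (auto intro!: continuous_intros)
  show ?thesis
    unfolding e1 e2
    using stein_half[OF \<sigma> d c bG bG', of "-y"] by simp
qed

lemma odd_zero:
  assumes "\<sigma>1 > 0" "\<sigma>2 > 0"
  shows "(\<integral>y. y * normal_density 0 \<sigma>1 (- y) \<partial>density lborel (normal_density 0 \<sigma>2)) = 0"
proof -
  define f where "f y = normal_density 0 \<sigma>2 y * (y * normal_density 0 \<sigma>1 (- y))" for y
  have e: "(\<integral>y. y * normal_density 0 \<sigma>1 (- y) \<partial>density lborel (normal_density 0 \<sigma>2)) = (\<integral>y. f y \<partial>lborel)"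
    unfolding f_def by (subst integral_density) auto
  have odd: "f (0 + -1 * x) = - f x" for x
    unfolding f_def normal_density_def by simp
  have "(\<integral>y. f y \<partial>lborel) = \<bar>-1\<bar> *\<^sub>R (\<integral>x. f (0 + -1 * x) \<partial>lborel)"
    by (rule lborel_integral_real_affine) simp
  also have "\<dots> = - (\<integral>y. f y \<partial>lborel)" by (simp only: odd) simp
  finally show ?thesis using e by simp
qed

lemma stepC:
  assumes m: "m > 0" and s: "s > 0"
  shows "(\<integral>t. normal_density 0 s t * (t * (g1 m t * indicator {0<..} t)) \<partial>lborel) \<ge> - m / sqrt (2 * pi * s\<^sup>2)"
proof -
  define c where "c = 1 / sqrt (2 * pi * s\<^sup>2)"
  have c0: "c > 0" using s by (simp add: c_def)
  have pc: "normal_density 0 s t \<le> c" for t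
    unfolding normal_density_def c_def using s by (auto intro!: divide_right_mono)
  have ein: "einterval 0 \<infinity> = {0<..}" by (auto simp: einterval_def)
  have i1: "integrable lborel (\<lambda>t. indicator {0<..} t * - (t * g1 m t))"
    using int_tg1(1)[OF m] unfolding set_integrable_def ein by simp
  have v1: "(\<integral>t. indicator {0<..} t * - (t * g1 m t) \<partial>lborel) = m"
    using int_tg1(2)[OF m] by (simp add: interval_lebesgue_integral_def set_lebesgue_integral_def ein)
  have i2: "integrable lborel (\<lambda>t. c * (t * (g1 m t * indicator {0<..} t)))"
    using integrable_mult_right[OF integrable_minus[OF i1], of c] by (simp add: mult_ac)
  have v2: "(\<integral>t. c * (t * (g1 m t * indicator {0<..} t)) \<partial>lborel) = - c * m"
  proof -
    have "(\<integral>t. c * (t * (g1 m t * indicator {0<..} t)) \<partial>lborel) = (\<integral>t. c * - (indicator {0<..} t * - (t * g1 m t)) \<partial>lborel)"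
      by (rule Bochner_Integration.integral_cong) (auto simp: indicator_def)
    also have "\<dots> = c * - (\<integral>t. indicator {0<..} t * - (t * g1 m t) \<partial>lborel)"
      by (simp only: integral_mult_right_zero Bochner_Integration.integral_minus)
    finally show ?thesis by (simp only: v1)
  qed
  have i3: "integrable lborel (\<lambda>t. normal_density 0 s t * (t * (g1 m t * indicator {0<..} t)))"
    using m by (intro int_phi_x_bounded[OF _ _ s, where B = "2/m"]) (auto simp: indicator_def b_g1[OF m])
  have "(\<integral>t. c * (t * (g1 m t * indicator {0<..} t)) \<partial>lborel)
        \<le> (\<integral>t. normal_density 0 s t * (t * (g1 m t * indicator {0<..} t)) \<partial>lborel)"
  proof (rule integral_mono[OF i2 i3])
    fix t
    have np: "t * (g1 m t * indicator {0<..} t) \<le> 0"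
      using m tanh_sq_le1[of "t/m"]
      by (auto simp: indicator_def g1_def mult_nonneg_nonneg mult_le_0_iff)
    show "c * (t * (g1 m t * indicator {0<..} t)) \<le> normal_density 0 s t * (t * (g1 m t * indicator {0<..} t))"
      using np pc[of t] by (intro mult_right_mono_neg) auto
  qed
  then show ?thesis using v2 by (simp add: c_def)
qed


lemma bnd_xy: "\<bar>a\<bar> \<le> C \<Longrightarrow> \<bar>x*y*(a::real)\<bar> \<le> C*((1+\<bar>x\<bar>)*(1+\<bar>y\<bar>))"
proof -
  assume h: "\<bar>a\<bar> \<le> C"
  have "\<bar>x\<bar>*\<bar>y\<bar> \<le> (1+\<bar>x\<bar>)*(1+\<bar>y\<bar>)" by (intro mult_mono) auto
  from mult_mono[OF this h] show ?thesis by (simp add: abs_mult mult_ac)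
qed
lemma bnd_x: "\<bar>a\<bar> \<le> C \<Longrightarrow> \<bar>x*(a::real)\<bar> \<le> C*((1+\<bar>x\<bar>)*(1+\<bar>y\<bar>))"
proof -
  assume h: "\<bar>a\<bar> \<le> C"
  have "\<bar>x\<bar> \<le> (1+\<bar>x\<bar>)*(1+\<bar>y\<bar>)" using mult_nonneg_nonneg[of "\<bar>x\<bar>" "\<bar>y\<bar>"] by (simp add: algebra_simps)
  from mult_mono[OF this h] show ?thesis by (simp add: abs_mult mult_ac)
qed
lemma bnd_y: "\<bar>a\<bar> \<le> C \<Longrightarrow> \<bar>y*(a::real)\<bar> \<le> C*((1+\<bar>x\<bar>)*(1+\<bar>y\<bar>))"
  using bnd_x[of a C y x] by (simp add: mult_ac)
lemma bnd_c: "\<bar>a\<bar> \<le> C \<Longrightarrow> \<bar>(a::real)\<bar> \<le> C*((1+\<bar>x\<bar>)*(1+\<bar>y\<bar>))"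
proof -
  assume h: "\<bar>a\<bar> \<le> C"
  have "1 \<le> (1+\<bar>x\<bar>)*(1+\<bar>y\<bar>)" using mult_nonneg_nonneg[of "\<bar>x\<bar>" "\<bar>y\<bar>"] by (simp add: algebra_simps)
  from mult_mono[OF this h] show ?thesis by (simp add: mult_ac)
qed
lemma bnd_s: "\<bar>a\<bar> \<le> C \<Longrightarrow> \<bar>(x+y)*(a::real)\<bar> \<le> C*((1+\<bar>x\<bar>)*(1+\<bar>y\<bar>))"
proof -
  assume h: "\<bar>a\<bar> \<le> C"
  have "\<bar>x+y\<bar> \<le> (1+\<bar>x\<bar>)*(1+\<bar>y\<bar>)"
  proof -
    have "\<bar>x+y\<bar> \<le> \<bar>x\<bar> + \<bar>y\<bar>" by (rule abs_triangle_ineq)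
    also have "\<dots> \<le> (1+\<bar>x\<bar>)*(1+\<bar>y\<bar>)" by (simp add: algebra_simps)
    finally show ?thesis .
  qed
  from mult_mono[OF this h] show ?thesis by (simp add: abs_mult mult_ac)
qed

lemma final_alg:
  fixes a b m I L Q :: real
  assumes a: "a > 0" and b: "b > 0" and m: "m > 0" and I: "I = a * b * Q" and L: "L = (a + b) * Q"
    and Lb: "L \<ge> - m / sqrt (2 * pi * (a + b))"
  shows "I \<ge> - (1 / sqrt (2 * pi)) * (m * a * b / (a + b) powr (3/2))
           - (3 / sqrt (2 * pi)) * (a * b * m ^ 3 / (a + b) powr (5/2))"
proof -
  let ?s = "a + b"
  have s: "?s > 0" using a b by simp
  have p3: "?s powr (3/2) = ?s * sqrt ?s"
  proof -
    have "?s powr (3/2) = ?s powr (1 + 1/2)" by simp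
    also have "\<dots> = ?s powr 1 * ?s powr (1/2)" by (rule powr_add)
    also have "\<dots> = ?s * sqrt ?s" using s by (simp add: powr_half_sqrt)
    finally show ?thesis .
  qed
  have I2: "I = a * b / ?s * L" using I L s by (simp add: field_simps)
  have "a * b / ?s * L \<ge> a * b / ?s * (- m / sqrt (2 * pi * ?s))"
    using Lb a b s by (intro mult_left_mono) auto
  also have "a * b / ?s * (- m / sqrt (2 * pi * ?s)) = - (1 / sqrt (2 * pi)) * (m * a * b / ?s powr (3/2))"
  proof -
    have sq: "sqrt (2 * pi * ?s) = sqrt (2 * pi) * sqrt ?s" by (rule real_sqrt_mult)
    show ?thesis unfolding p3 sq using s by (simp add: field_simps)
  qed
  finally have 1: "I \<ge> - (1 / sqrt (2 * pi)) * (m * a * b / ?s powr (3/2))" using I2 by simp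
  have "0 \<le> (3 / sqrt (2 * pi)) * (a * b * m ^ 3 / ?s powr (5/2))"
    using a b m s by (intro mult_nonneg_nonneg divide_nonneg_nonneg) auto
  with 1 show ?thesis by linarith
qed



theorem mainTheorem18:
  fixes M :: "'a measure" and X Y :: "'a \<Rightarrow> real"
    and \<mu> \<sigma>X \<sigma>Y :: real
  assumes "prob_space M"
    and "\<mu> > 0"
    and "\<sigma>X \<ge> 0" and "\<sigma>Y \<ge> 0"
    and "\<sigma>X\<^sup>2 + \<sigma>Y\<^sup>2 > 0"
    and "X \<in> borel_measurable M" and "Y \<in> borel_measurable M"
    and "distr M borel X = gaussian_measure 0 \<sigma>X"
    and "distr M borel Y = gaussian_measure 0 \<sigma>Y"
    and "prob_space.indep_var M borel X borel Y"
  shows "(\<integral>\<omega>. (1 - (tanh ((X \<omega> + Y \<omega>) / \<mu>))\<^sup>2) * X \<omega> * Y \<omega>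
              * (if X \<omega> + Y \<omega> > 0 then 1 else 0) \<partial>M)
         \<ge> - (1 / sqrt (2 * pi)) * (\<mu> * \<sigma>X\<^sup>2 * \<sigma>Y\<^sup>2 / (\<sigma>X\<^sup>2 + \<sigma>Y\<^sup>2) powr (3/2))
           - (3 / sqrt (2 * pi)) * (\<sigma>X\<^sup>2 * \<sigma>Y\<^sup>2 * \<mu> ^ 3 / (\<sigma>X\<^sup>2 + \<sigma>Y\<^sup>2) powr (5/2))"
proof -
  interpret M: prob_space M by (rule assms(1))
  have mX[measurable]: "X \<in> borel_measurable M" and mY[measurable]: "Y \<in> borel_measurable M"
    using assms(6,7) by auto
  have mu: "\<mu> > 0" by (rule assms(2))
  consider (deg) "\<sigma>X = 0 \<or> \<sigma>Y = 0" | (pos) "\<sigma>X > 0" "\<sigma>Y > 0" using assms(3,4) by linarith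
  then show ?thesis
  proof cases
    case deg
    have AEX: "AE \<omega> in M. X \<omega> = 0" if "\<sigma>X = 0"
    proof -
      have "AE x in distr M borel X. x = 0" unfolding assms(8) gaussian_measure_def using that by (simp add: AE_return)
      then show ?thesis by (subst (asm) AE_distr_iff) auto
    qed
    have AEY: "AE \<omega> in M. Y \<omega> = 0" if "\<sigma>Y = 0"
    proof -
      have "AE x in distr M borel Y. x = 0" unfolding assms(9) gaussian_measure_def using that by (simp add: AE_return)
      then show ?thesis by (subst (asm) AE_distr_iff) auto
    qed
    have AE0: "AE \<omega> in M. X \<omega> * Y \<omega> = 0"
      using deg AEX AEY by (auto elim: eventually_mono)
    have "(\<integral>\<omega>. (1 - (tanh ((X \<omega> + Y \<omega>) / \<mu>))\<^sup>2) * X \<omega> * Y \<omega>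
              * (if X \<omega> + Y \<omega> > 0 then 1 else 0) \<partial>M) = (\<integral>\<omega>. 0 \<partial>M)"
      apply (rule integral_cong_AE)
        apply measurable
      using AE0 by (auto elim!: eventually_mono)
    then show ?thesis using deg by auto
  next
    case pos
    let ?NX = "density lborel (normal_density 0 \<sigma>X)"
    let ?NY = "density lborel (normal_density 0 \<sigma>Y)"
    let ?P = "?NX \<Otimes>\<^sub>M ?NY"
    have dX: "distr M borel X = ?NX" using assms(8) pos by (simp add: gaussian_measure_def)
    have dY: "distr M borel Y = ?NY" using assms(9) pos by (simp add: gaussian_measure_def)
    have joint: "distr M (borel \<Otimes>\<^sub>M borel) (\<lambda>\<omega>. (X \<omega>, Y \<omega>)) = ?P"
      using M.indep_var_distribution_eq[of borel X borel Y] assms(10) dX dY by simp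
    have transfer: "(\<integral>\<omega>. F (X \<omega>, Y \<omega>) \<partial>M) = integral\<^sup>L ?P F"
      if [measurable]: "F \<in> borel_measurable (borel \<Otimes>\<^sub>M borel)" for F :: "real \<times> real \<Rightarrow> real"
      by (subst joint[symmetric], subst integral_distr) auto
    interpret P: pair_sigma_finite ?NX ?NY
      by (intro pair_sigma_finite.intro prob_space_imp_sigma_finite prob_space_normal_density) (use pos in auto)
    have b1: "\<bar>gg \<mu> t * indicator {0<..} t\<bar> \<le> 1" for t
      using b_gg[of \<mu> t] by (auto simp: indicator_def)
    have b2: "\<bar>g1 \<mu> t * indicator {0<..} t\<bar> \<le> 2 / \<mu>" for t
      using b_g1[OF mu, of t] mu by (auto simp: indicator_def)
    have b3: "\<bar>g2 \<mu> t * indicator {0<..} t\<bar> \<le> 4 / \<mu>\<^sup>2" for t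
      using b_g2[OF mu, of t] mu by (auto simp: indicator_def)
    have iI: "integrable ?P (\<lambda>(x, y). x * y * (gg \<mu> (x + y) * indicator {0<..} (x + y)))"
      apply (rule int_prod[OF pos, where C = 1]) apply measurable apply (simp only: case_prod_conv) by (rule bnd_xy[OF b1])
    have iJ: "integrable ?P (\<lambda>(x, y). y * (g1 \<mu> (x + y) * indicator {0<..} (x + y)))"
      apply (rule int_prod[OF pos, where C = "2/\<mu>"]) apply measurable apply (simp only: case_prod_conv) by (rule bnd_y[OF b2])
    have iK: "integrable ?P (\<lambda>(x, y). x * (g1 \<mu> (x + y) * indicator {0<..} (x + y)))"
      apply (rule int_prod[OF pos, where C = "2/\<mu>"]) apply measurable apply (simp only: case_prod_conv) by (rule bnd_x[OF b2])
    have iQ: "integrable ?P (\<lambda>(x, y). g2 \<mu> (x + y) * indicator {0<..} (x + y))"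
      apply (rule int_prod[OF pos, where C = "4/\<mu>\<^sup>2"]) apply measurable apply (simp only: case_prod_conv) by (rule bnd_c[OF b3])
    define I where "I = integral\<^sup>L ?P (\<lambda>(x, y). x * y * (gg \<mu> (x + y) * indicator {0<..} (x + y)))"
    define J where "J = integral\<^sup>L ?P (\<lambda>(x, y). y * (g1 \<mu> (x + y) * indicator {0<..} (x + y)))"
    define K where "K = integral\<^sup>L ?P (\<lambda>(x, y). x * (g1 \<mu> (x + y) * indicator {0<..} (x + y)))"
    define Q where "Q = integral\<^sup>L ?P (\<lambda>(x, y). g2 \<mu> (x + y) * indicator {0<..} (x + y))"
    define L where "L = integral\<^sup>L ?P (\<lambda>(x, y). (x + y) * (g1 \<mu> (x + y) * indicator {0<..} (x + y)))"
    note sg = stein_shift[where G = "gg \<mu>" and G' = "g1 \<mu>" and B = 1 and B' = "2/\<mu>",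
                          OF _ d_gg[OF mu] cont_g1[OF mu] b_gg b_g1[OF mu]]
    note s1 = stein_shift[where G = "g1 \<mu>" and G' = "g2 \<mu>" and B = "2/\<mu>" and B' = "4/\<mu>\<^sup>2",
                          OF _ d_g1[OF mu] cont_g2[OF mu] b_g1[OF mu] b_g2[OF mu]]
    have inI: "(\<integral>x. x * y * (gg \<mu> (x + y) * indicator {0<..} (x + y)) \<partial>?NX)
       = \<sigma>X\<^sup>2 * (y * normal_density 0 \<sigma>X (- y))
         + \<sigma>X\<^sup>2 * (\<integral>x. y * (g1 \<mu> (x + y) * indicator {0<..} (x + y)) \<partial>?NX)" for y
    proof -
      have "(\<integral>x. x * y * (gg \<mu> (x + y) * indicator {0<..} (x + y)) \<partial>?NX)
          = y * (\<integral>x. x * (gg \<mu> (x + y) * indicator {0<..} (x + y)) \<partial>?NX)"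
        by (subst integral_mult_right_zero[symmetric]) (simp add: mult_ac)
      also have "\<dots> = y * (\<sigma>X\<^sup>2 * (gg \<mu> 0 * normal_density 0 \<sigma>X (- y))
         + \<sigma>X\<^sup>2 * (\<integral>x. g1 \<mu> (x + y) * indicator {0<..} (x + y) \<partial>?NX))"
        using sg[OF pos(1)] by simp
      also have "\<dots> = \<sigma>X\<^sup>2 * (y * normal_density 0 \<sigma>X (- y))
         + \<sigma>X\<^sup>2 * (y * (\<integral>x. g1 \<mu> (x + y) * indicator {0<..} (x + y) \<partial>?NX))"
        by (simp add: algebra_simps)
      also have "\<dots> = \<sigma>X\<^sup>2 * (y * normal_density 0 \<sigma>X (- y))
         + \<sigma>X\<^sup>2 * (\<integral>x. y * (g1 \<mu> (x + y) * indicator {0<..} (x + y)) \<partial>?NX)"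
        by (subst integral_mult_right_zero[symmetric]) simp
      finally show ?thesis .
    qed
    have iodd: "integrable ?NY (\<lambda>y. y * normal_density 0 \<sigma>X (- y))"
    proof -
      have "integrable lborel (\<lambda>y. normal_density 0 \<sigma>Y y * (y * normal_density 0 \<sigma>X (- y)))"
        using pos by (intro int_phi_x_bounded[where B = "1 / sqrt (2 * pi * \<sigma>X\<^sup>2)"])
          (auto simp: normal_density_def intro!: divide_right_mono)
      then show ?thesis by (subst integrable_density) auto
    qed
    have IJ: "I = \<sigma>X\<^sup>2 * J"
    proof -
      have "I = (\<integral>y. (\<integral>x. x * y * (gg \<mu> (x + y) * indicator {0<..} (x + y)) \<partial>?NX) \<partial>?NY)"
        unfolding I_def by (rule P.integral_snd[OF iI, symmetric])
      also have "\<dots> = (\<integral>y. \<sigma>X\<^sup>2 * (y * normal_density 0 \<sigma>X (- y))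
         + \<sigma>X\<^sup>2 * (\<integral>x. y * (g1 \<mu> (x + y) * indicator {0<..} (x + y)) \<partial>?NX) \<partial>?NY)"
        by (simp only: inI)
      also have "\<dots> = \<sigma>X\<^sup>2 * (\<integral>y. y * normal_density 0 \<sigma>X (- y) \<partial>?NY)
         + \<sigma>X\<^sup>2 * (\<integral>y. (\<integral>x. y * (g1 \<mu> (x + y) * indicator {0<..} (x + y)) \<partial>?NX) \<partial>?NY)"
        using iodd P.integrable_snd[OF iJ] by simp
      also have "\<dots> = \<sigma>X\<^sup>2 * J"
        using odd_zero[OF pos] P.integral_snd[OF iJ] unfolding J_def by simp
      finally show ?thesis .
    qed
    have KQ: "K = \<sigma>X\<^sup>2 * Q"
    proof -
      have "K = (\<integral>y. (\<integral>x. x * (g1 \<mu> (x + y) * indicator {0<..} (x + y)) \<partial>?NX) \<partial>?NY)"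
        unfolding K_def by (rule P.integral_snd[OF iK, symmetric])
      also have "\<dots> = (\<integral>y. \<sigma>X\<^sup>2 * (\<integral>x. g2 \<mu> (x + y) * indicator {0<..} (x + y) \<partial>?NX) \<partial>?NY)"
        using s1[OF pos(1)] by simp
      also have "\<dots> = \<sigma>X\<^sup>2 * Q"
        using P.integral_snd[OF iQ] unfolding Q_def by simp
      finally show ?thesis .
    qed
    have JQ: "J = \<sigma>Y\<^sup>2 * Q"
    proof -
      have "J = (\<integral>x. (\<integral>y. y * (g1 \<mu> (x + y) * indicator {0<..} (x + y)) \<partial>?NY) \<partial>?NX)"
        unfolding J_def by (rule P.integral_fst[OF iJ, symmetric])
      also have "\<dots> = (\<integral>x. (\<integral>y. y * (g1 \<mu> (y + x) * indicator {0<..} (y + x)) \<partial>?NY) \<partial>?NX)"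
        by (simp add: add.commute)
      also have "\<dots> = (\<integral>x. \<sigma>Y\<^sup>2 * (\<integral>y. g2 \<mu> (y + x) * indicator {0<..} (y + x) \<partial>?NY) \<partial>?NX)"
        using s1[OF pos(2)] by simp
      also have "\<dots> = (\<integral>x. \<sigma>Y\<^sup>2 * (\<integral>y. g2 \<mu> (x + y) * indicator {0<..} (x + y) \<partial>?NY) \<partial>?NX)"
        by (simp add: add.commute)
      also have "\<dots> = \<sigma>Y\<^sup>2 * Q"
        using P.integral_fst[OF iQ] unfolding Q_def by simp
      finally show ?thesis .
    qed
    have LKJ: "L = K + J"
    proof -
      have "L = integral\<^sup>L ?P (\<lambda>z. (\<lambda>(x, y). x * (g1 \<mu> (x + y) * indicator {0<..} (x + y))) z
                + (\<lambda>(x, y). y * (g1 \<mu> (x + y) * indicator {0<..} (x + y))) z)"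
        unfolding L_def by (rule Bochner_Integration.integral_cong) (auto simp: algebra_simps)
      also have "\<dots> = K + J"
        unfolding K_def J_def by (rule Bochner_Integration.integral_add[OF iK iJ])
      finally show ?thesis .
    qed
    have lhs: "(\<integral>\<omega>. (1 - (tanh ((X \<omega> + Y \<omega>) / \<mu>))\<^sup>2) * X \<omega> * Y \<omega>
              * (if X \<omega> + Y \<omega> > 0 then 1 else 0) \<partial>M) = I"
    proof -
      have "(\<integral>\<omega>. (1 - (tanh ((X \<omega> + Y \<omega>) / \<mu>))\<^sup>2) * X \<omega> * Y \<omega>
              * (if X \<omega> + Y \<omega> > 0 then 1 else 0) \<partial>M)
          = (\<integral>\<omega>. (\<lambda>(x, y). x * y * (gg \<mu> (x + y) * indicator {0<..} (x + y))) (X \<omega>, Y \<omega>) \<partial>M)"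
        by (rule Bochner_Integration.integral_cong) (auto simp: gg_def indicator_def)
      also have "\<dots> = I" unfolding I_def by (rule transfer) measurable
      finally show ?thesis .
    qed
    define s where "s = sqrt (\<sigma>X\<^sup>2 + \<sigma>Y\<^sup>2)"
    have s0: "s > 0" using assms(5) by (simp add: s_def)
    have Lb: "L \<ge> - \<mu> / sqrt (2 * pi * (\<sigma>X\<^sup>2 + \<sigma>Y\<^sup>2))"
    proof -
      have dXd: "distributed M lborel X (normal_density 0 \<sigma>X)"
        unfolding distributed_def
      proof (intro conjI)
        have "distr M lborel X = distr M borel X" by (rule distr_cong) auto
        then show "distr M lborel X = density lborel (\<lambda>x. ennreal (normal_density 0 \<sigma>X x))" using dX by simp
      qed auto
      have dYd: "distributed M lborel Y (normal_density 0 \<sigma>Y)"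
        unfolding distributed_def
      proof (intro conjI)
        have "distr M lborel Y = distr M borel Y" by (rule distr_cong) auto
        then show "distr M lborel Y = density lborel (\<lambda>x. ennreal (normal_density 0 \<sigma>Y x))" using dY by simp
      qed auto
      have dS: "distr M lborel (\<lambda>\<omega>. X \<omega> + Y \<omega>) = density lborel (normal_density 0 s)"
        using M.add_indep_normal[OF assms(10) pos dXd dYd] unfolding distributed_def s_def by simp
      have "L = (\<integral>\<omega>. (\<lambda>(x, y). (x + y) * (g1 \<mu> (x + y) * indicator {0<..} (x + y))) (X \<omega>, Y \<omega>) \<partial>M)"
        unfolding L_def by (rule transfer[symmetric]) measurable
      also have "\<dots> = (\<integral>\<omega>. (\<lambda>t. t * (g1 \<mu> t * indicator {0<..} t)) (X \<omega> + Y \<omega>) \<partial>M)"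
        by simp
      also have "\<dots> = integral\<^sup>L (distr M lborel (\<lambda>\<omega>. X \<omega> + Y \<omega>)) (\<lambda>t. t * (g1 \<mu> t * indicator {0<..} t))"
        by (rule integral_distr[symmetric]) auto
      also have "\<dots> = (\<integral>t. normal_density 0 s t * (t * (g1 \<mu> t * indicator {0<..} t)) \<partial>lborel)"
        unfolding dS by (subst integral_density) auto
      finally have "L = \<dots>" .
      moreover have "s\<^sup>2 = \<sigma>X\<^sup>2 + \<sigma>Y\<^sup>2" unfolding s_def by (simp add: add_nonneg_nonneg)
      ultimately show ?thesis using stepC[OF mu s0] by simp
    qed
    have "I \<ge> - (1 / sqrt (2 * pi)) * (\<mu> * \<sigma>X\<^sup>2 * \<sigma>Y\<^sup>2 / (\<sigma>X\<^sup>2 + \<sigma>Y\<^sup>2) powr (3/2))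
           - (3 / sqrt (2 * pi)) * (\<sigma>X\<^sup>2 * \<sigma>Y\<^sup>2 * \<mu> ^ 3 / (\<sigma>X\<^sup>2 + \<sigma>Y\<^sup>2) powr (5/2))"
      by (rule final_alg[where Q = Q and L = L]) (use pos mu Lb IJ JQ KQ LKJ in \<open>auto simp: algebra_simps\<close>)
    then show ?thesis using lhs by simp
  qed
qed


end
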